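(* Let $u(t,x)$ be a solution, for $t\ge0$, of $$\partial_tu=D_M(t)\partial_{xx}u-d_M(t)u+R\big(t,u(t-\tau(t),\cdot)\big)(x).$$ Then $$\int_0^Tk_I(t,s,\cdot)*b(s,u(s,\cdot))\,ds\equiv\int_0^Tk_I(t,s,\cdot)*R\big(s,u(s-\tau(s),\cdot)\big)\,ds,\qquad t>T.$$ If $u(s,x)\equiv u(s)$ is independent of $x$, this reduces to $$\int_0^Te^{-\int_s^td_I(\varsigma)d\varsigma}b(s,u(s))\,ds=\int_0^Te^{-\int_s^td_I(\varsigma)d\varsigma}R\big(s,u(s-\tau(s))\big)\,ds.$$
   Context: Setting: $T>0$; $D_M,D_I\ge0$, $d_M,d_I>0$, $\tau>0$, $p\ge0$ are $C^1$ $T$-periodic functions with $\tau'<1$; $h\ge0$ is $C^1$; $b(t,u)=p(t)h(u)$; there are $0<\alpha\le\beta<t_\alpha\le t_\beta<T$ with $t_\alpha-\tau(t_\alpha)=\alpha$, $t_\beta-\tau(t_\beta)=\beta$ and $p=0$ on $[0,\alpha]\cup[\beta,T]$ (so $b(t,\cdot)\equiv0$ for $t\in[0,T]\setminus[\alpha,\beta]$). $k_I(t,s,x)=(4\pi\int_s^tD_I)^{-1/2}\exp(-x^2/(4\int_s^tD_I)-\int_s^td_I)$ is the Green function of $\partial_t\rho=D_I(t)\rho_{xx}-d_I(t)\rho$ (with $k_I(t,t,\cdot)=\delta_0$), and $k_M$ is defined analogously with $D_M,d_M$. For a bounded function $\phi$, $R(t,\phi)(x)=(1-\tau'(t))\big(k_I(t,t-\tau(t),\cdot)*b(t-\tau(t),\phi(\cdot))\big)(x)$,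 and $R(t,\cdot)\equiv0$ for $t\in[0,T]\setminus[t_\alpha,t_\beta]$. Convolution $*$ is in $x$; for constants, $k_I(t,s,\cdot)*c=e^{-\int_s^td_I}c$. *)

theory Defs
  imports "HOL-Analysis.Analysis"
begin

definition C1_periodic :: "real \<Rightarrow> (real \<Rightarrow> real) \<Rightarrow> bool" where
  "C1_periodic T f \<longleftrightarrow> f C1_differentiable_on UNIV \<and> (\<forall>t. f (t + T) = f t)"

text \<open>Action of the Green function k(t,s,.) of rho_t = D(t) rho_xx - d(t) rho by
  convolution in x, for s \<le> t. When the diffusion integral over [s,t] vanishes
  (in particular when s = t) the kernel is exp(-int d) times the Dirac mass.\<close>
definition heat_conv ::
  "(real \<Rightarrow> real) \<Rightarrow> (real \<Rightarrow> real) \<Rightarrow> real \<Rightarrow> real \<Rightarrow> (real \<Rightarrow> real) \<Rightarrow> real \<Rightarrow> real" where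
  "heat_conv D d t s \<phi> x =
     (let \<sigma> = integral {s..t} D; \<mu> = integral {s..t} d in
      if \<sigma> = 0 then exp (- \<mu>) * \<phi> x
      else integral UNIV (\<lambda>y. (4 * pi * \<sigma>) powr (-1/2)
                                 * exp (- (x - y)\<^sup>2 / (4 * \<sigma>) - \<mu>) * \<phi> y))"

definition bfun :: "(real \<Rightarrow> real) \<Rightarrow> (real \<Rightarrow> real) \<Rightarrow> real \<Rightarrow> real \<Rightarrow> real" where
  "bfun p h t v = p t * h v"

definition Rop ::
  "(real \<Rightarrow> real) \<Rightarrow> (real \<Rightarrow> real) \<Rightarrow> (real \<Rightarrow> real) \<Rightarrow> (real \<Rightarrow> real) \<Rightarrow> (real \<Rightarrow> real)
   \<Rightarrow> real \<Rightarrow> (real \<Rightarrow> real) \<Rightarrow> real \<Rightarrow> real" where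
  "Rop DI dI \<tau> p h t \<phi> x =
     (1 - deriv \<tau> t) * heat_conv DI dI t (t - \<tau> t) (\<lambda>y. bfun p h (t - \<tau> t) (\<phi> y)) x"

definition pde_solution ::
  "(real \<Rightarrow> real) \<Rightarrow> (real \<Rightarrow> real) \<Rightarrow> (real \<Rightarrow> real)
   \<Rightarrow> (real \<Rightarrow> (real \<Rightarrow> real) \<Rightarrow> real \<Rightarrow> real) \<Rightarrow> (real \<Rightarrow> real \<Rightarrow> real) \<Rightarrow> bool" where
  "pde_solution DM dM \<tau> R u \<longleftrightarrow>
     continuous_on ({0..} \<times> UNIV) (\<lambda>(t, x). u t x) \<and>
     (\<forall>S. \<exists>B. \<forall>t\<in>{0..S}. \<forall>x. \<bar>u t x\<bar> \<le> B) \<and>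
     (\<forall>t>0. \<forall>x.
        (\<forall>y. (\<lambda>z. u t z) differentiable (at y)) \<and>
        deriv (\<lambda>z. u t z) differentiable (at x) \<and>
        ((\<lambda>s. u s x) has_real_derivative
           (DM t * deriv (deriv (\<lambda>z. u t z)) x - dM t * u t x + R t (u (t - \<tau> t)) x)) (at t))"

end

theory Submission
  imports Defs "HOL-Probability.Probability"
begin


lemma nd_kernel:
  assumes "\<sigma> > 0"
  shows "(4 * pi * \<sigma>) powr (-1/2) * exp (- (x - y)\<^sup>2 / (4 * \<sigma>) - \<mu>)
         = exp (-\<mu>) * normal_density x (sqrt (2*\<sigma>)) y"
proof -
  have sq: "(sqrt (2*\<sigma>))\<^sup>2 = 2*\<sigma>" using assms by simp
  have "(4 * pi * \<sigma>) powr (-1/2) = 1 / sqrt (4 * pi * \<sigma>)"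
    using assms by (simp add: powr_minus_divide powr_half_sqrt[symmetric])
  hence "(4 * pi * \<sigma>) powr (-1/2) = 1 / sqrt (2 * pi * (sqrt (2*\<sigma>))\<^sup>2)"
    unfolding sq by (simp add: mult.assoc)
  moreover have "exp (- (x - y)\<^sup>2 / (4 * \<sigma>) - \<mu>) = exp (-\<mu>) * exp (-(y - x)\<^sup>2/ (2 * (sqrt (2*\<sigma>))\<^sup>2))"
  proof -
    have "- (x - y)\<^sup>2 / (4 * \<sigma>) - \<mu> = -\<mu> + (-(y - x)\<^sup>2/ (2 * (sqrt (2*\<sigma>))\<^sup>2))"
      unfolding sq by (simp add: power2_commute)
    thus ?thesis by (simp only: exp_add mult.commute)
  qed
  ultimately show ?thesis unfolding normal_density_def by simp
qed

lemma nd_int: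
  assumes [measurable]: "g \<in> borel_measurable borel" and "\<forall>y. \<bar>g y\<bar> \<le> B" and c: "c > 0"
  shows "integrable lborel (\<lambda>y. normal_density x c y * g y)"
proof -
  have i1: "integrable lborel (\<lambda>y. B * normal_density x c y)"
    using c by (intro integrable_mult_right integrable_normal_density)
  have m: "(\<lambda>y. normal_density x c y * g y) \<in> borel_measurable lborel" by simp
  have "AE y in lborel. norm (normal_density x c y * g y) \<le> norm (B * normal_density x c y)"
  proof
    fix y
    have "\<bar>g y\<bar> \<le> B" using assms by auto
    hence "normal_density x c y * \<bar>g y\<bar> \<le> normal_density x c y * B"
      by (intro mult_left_mono) auto
    moreover have "0 \<le> B" using assms(2) by (meson abs_ge_zero order_trans)
    ultimately show "norm (normal_density x c y * g y) \<le> norm (B * normal_density x c y)"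
      by (simp add: abs_mult mult.commute)
  qed
  thus ?thesis using Bochner_Integration.integrable_bound[OF i1 m] by blast
qed

lemma nd_int_bound:
  assumes [measurable]: "g \<in> borel_measurable borel" and "\<forall>y. \<bar>g y\<bar> \<le> B" and c: "c > 0"
  shows "\<bar>\<integral>y. normal_density x c y * g y \<partial>lborel\<bar> \<le> B"
proof -
  have "\<bar>\<integral>y. normal_density x c y * g y \<partial>lborel\<bar> \<le> (\<integral>y. \<bar>normal_density x c y * g y\<bar> \<partial>lborel)"
    by (rule integral_abs_bound)
  also have "\<dots> \<le> (\<integral>y. B * normal_density x c y \<partial>lborel)"
    using assms by (intro integral_mono nd_int integrable_abs integrable_mult_right integrable_normal_density)
      (auto simp: abs_mult mult.commute intro!: mult_right_mono)
  also have "\<dots> = B" using c by simp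
  finally show ?thesis .
qed

lemma hc_zero:
  "integral {s..t} D = 0 \<Longrightarrow> heat_conv D d t s g x = exp (- integral {s..t} d) * g x"
  unfolding heat_conv_def Let_def by simp

lemma hc_pos:
  assumes "integral {s..t} D > 0" "g \<in> borel_measurable borel" "\<forall>y. \<bar>g y\<bar> \<le> B"
  shows "heat_conv D d t s g x = exp (- integral {s..t} d) *
           (\<integral>y. normal_density x (sqrt (2 * integral {s..t} D)) y * g y \<partial>lborel)"
proof -
  let ?\<sigma> = "integral {s..t} D" and ?\<mu> = "integral {s..t} d"
  have "heat_conv D d t s g x = integral UNIV (\<lambda>y. exp (-?\<mu>) * (normal_density x (sqrt (2*?\<sigma>)) y * g y))"
    unfolding heat_conv_def Let_def using assms(1) nd_kernel[OF assms(1)]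
    by (simp add: mult.assoc)
  also have "\<dots> = (\<integral>y. exp (-?\<mu>) * (normal_density x (sqrt (2*?\<sigma>)) y * g y) \<partial>lborel)"
    by (rule integral_lborel) (intro integrable_mult_right nd_int[OF assms(2,3)], use assms(1) in simp)
  also have "\<dots> = exp (-?\<mu>) * (\<integral>y. normal_density x (sqrt (2*?\<sigma>)) y * g y \<partial>lborel)"
    by simp
  finally show ?thesis .
qed

lemma nd_shift: "normal_density \<mu> \<sigma> v = normal_density 0 \<sigma> (v - \<mu>)"
  unfolding normal_density_def by simp

lemma nd_sym: "normal_density \<mu> \<sigma> v = normal_density v \<sigma> \<mu>"
  unfolding normal_density_def by (simp add: power2_commute)

lemma nd_meas2[measurable]:
  "(\<lambda>p. normal_density (f p) b (g p)) \<in> borel_measurable M"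
  if [measurable]: "f \<in> borel_measurable M" "g \<in> borel_measurable M"
  unfolding normal_density_def by measurable

lemma nd_nn1: "c > 0 \<Longrightarrow> (\<integral>\<^sup>+y. ennreal (normal_density x c y) \<partial>lborel) = 1"
  by (subst nn_integral_eq_integral) auto

lemma nd_conv:
  assumes a: "a > 0" and b: "b > 0"
  shows "(\<integral>\<^sup>+y. ennreal (normal_density x a y * normal_density y b z) \<partial>lborel)
         = ennreal (normal_density x (sqrt (a\<^sup>2 + b\<^sup>2)) z)"
proof -
  have "(\<integral>\<^sup>+y. ennreal (normal_density x a y * normal_density y b z) \<partial>lborel)
      = (\<integral>\<^sup>+y. ennreal (normal_density x a (x + 1 * y) * normal_density (x + 1 * y) b z) \<partial>lborel)"
    using nn_integral_real_affine[where c=1 and t=x and f="\<lambda>y. ennreal (normal_density x a y * normal_density y b z)"]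
    by simp
  also have "\<dots> = (\<integral>\<^sup>+y. ennreal (normal_density 0 b ((z - x) - y) * normal_density 0 a y) \<partial>lborel)"
  proof (intro nn_integral_cong)
    fix y
    have 1: "normal_density x a (x + 1 * y) = normal_density 0 a y" by (simp add: nd_shift[of x])
    have 2: "normal_density (x + 1 * y) b z = normal_density 0 b ((z - x) - y)"
      by (subst nd_shift) (simp add: diff_diff_eq)
    show "ennreal (normal_density x a (x + 1 * y) * normal_density (x + 1 * y) b z)
        = ennreal (normal_density 0 b ((z - x) - y) * normal_density 0 a y)"
      unfolding 1 2 by (simp add: mult.commute)
  qed
  also have "\<dots> = ennreal (normal_density 0 (sqrt (b\<^sup>2 + a\<^sup>2)) (z - x))"
    using conv_normal_density_zero_mean[OF b a] by (rule fun_cong)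
  also have "\<dots> = ennreal (normal_density x (sqrt (a\<^sup>2 + b\<^sup>2)) z)"
    by (simp add: nd_shift[of x] add.commute)
  finally show ?thesis .
qed

lemma nd_conv_int:
  assumes a: "a > 0" and b: "b > 0"
  shows "(\<integral>y. normal_density x a y * normal_density y b z \<partial>lborel)
         = normal_density x (sqrt (a\<^sup>2 + b\<^sup>2)) z"
  by (subst integral_eq_nn_integral) (auto simp: nd_conv[OF a b])

lemma nd_semigroup:
  assumes a: "a > 0" and b: "b > 0"
    and [measurable]: "g \<in> borel_measurable borel" and gB: "\<forall>y. \<bar>g y\<bar> \<le> B"
  shows "(\<integral>y. normal_density x a y * (\<integral>z. normal_density y b z * g z \<partial>lborel) \<partial>lborel)
       = (\<integral>z. normal_density x (sqrt (a\<^sup>2 + b\<^sup>2)) z * g z \<partial>lborel)"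
proof -
  define H where "H y z = normal_density x a y * (normal_density y b z * g z)" for y z
  have B0: "0 \<le> B" using gB by (meson abs_ge_zero order_trans)
  have Hm[measurable]: "(\<lambda>(y,z). H y z) \<in> borel_measurable (lborel \<Otimes>\<^sub>M lborel)"
    unfolding H_def by measurable
  have Km[measurable]: "(\<lambda>(y,z). B * (normal_density x a y * normal_density y b z)) \<in> borel_measurable (lborel \<Otimes>\<^sub>M lborel)"
    by measurable
  have "(\<integral>\<^sup>+p. ennreal (norm (B * (normal_density x a (fst p) * normal_density (fst p) b (snd p)))) \<partial>(lborel \<Otimes>\<^sub>M lborel))
      = (\<integral>\<^sup>+y. \<integral>\<^sup>+z. ennreal (B * (normal_density x a y * normal_density y b z)) \<partial>lborel \<partial>lborel)"
    using B0 by (subst lborel.nn_integral_fst[symmetric]) (auto simp: abs_mult)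
  also have "\<dots> = (\<integral>\<^sup>+y. ennreal (B * normal_density x a y) * (\<integral>\<^sup>+z. ennreal (normal_density y b z) \<partial>lborel) \<partial>lborel)"
    using B0 by (intro nn_integral_cong) (simp add: nn_integral_cmult[symmetric] ennreal_mult' mult.assoc)
  also have "\<dots> = (\<integral>\<^sup>+y. ennreal B * ennreal (normal_density x a y) \<partial>lborel)"
    using B0 b by (simp add: nd_nn1 ennreal_mult')
  also have "\<dots> = ennreal B" using a by (simp add: nn_integral_cmult nd_nn1)
  finally have fin: "(\<integral>\<^sup>+p. ennreal (norm (B * (normal_density x a (fst p) * normal_density (fst p) b (snd p)))) \<partial>(lborel \<Otimes>\<^sub>M lborel)) < \<infinity>"
    by simp
  have Kint: "integrable (lborel \<Otimes>\<^sub>M lborel) (\<lambda>(y,z). B * (normal_density x a y * normal_density y b z))"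
    unfolding integrable_iff_bounded using fin Km by (simp add: case_prod_beta)
  have "AE p in lborel \<Otimes>\<^sub>M lborel. norm ((\<lambda>(y,z). H y z) p) \<le> norm ((\<lambda>(y,z). B * (normal_density x a y * normal_density y b z)) p)"
  proof (rule AE_I2, clarify)
    fix y z
    have "\<bar>g z\<bar> \<le> B" using gB by auto
    hence "normal_density x a y * normal_density y b z * \<bar>g z\<bar> \<le> normal_density x a y * normal_density y b z * B"
      by (intro mult_left_mono) auto
    thus "norm (H y z) \<le> norm (B * (normal_density x a y * normal_density y b z))"
      using B0 unfolding H_def by (simp add: abs_mult mult.commute mult.left_commute)
  qed
  hence Hint: "integrable (lborel \<Otimes>\<^sub>M lborel) (\<lambda>(y,z). H y z)"
    using Bochner_Integration.integrable_bound[OF Kint Hm] by blast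
  have "(\<integral>y. normal_density x a y * (\<integral>z. normal_density y b z * g z \<partial>lborel) \<partial>lborel)
      = (\<integral>y. (\<integral>z. H y z \<partial>lborel) \<partial>lborel)"
    unfolding H_def by simp
  also have "\<dots> = (\<integral>z. (\<integral>y. H y z \<partial>lborel) \<partial>lborel)"
    using lborel_pair.Fubini_integral[OF Hint] by simp
  also have "\<dots> = (\<integral>z. g z * (\<integral>y. normal_density x a y * normal_density y b z \<partial>lborel) \<partial>lborel)"
    unfolding H_def by (intro Bochner_Integration.integral_cong refl)
      (simp flip: integral_mult_left_zero add: mult.commute mult.left_commute)
  also have "\<dots> = (\<integral>z. normal_density x (sqrt (a\<^sup>2 + b\<^sup>2)) z * g z \<partial>lborel)"
    by (simp only: nd_conv_int[OF a b]) (simp add: mult.commute)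
  finally show ?thesis .
qed

lemma nd_int_meas[measurable]:
  assumes [measurable]: "g \<in> borel_measurable borel"
  shows "(\<lambda>y. \<integral>z. normal_density y b z * g z \<partial>lborel) \<in> borel_measurable borel"
  by measurable

lemma int_split:
  fixes f :: "real \<Rightarrow> real"
  assumes "continuous_on UNIV f" "r \<le> s" "s \<le> t"
  shows "integral {r..t} f = integral {r..s} f + integral {s..t} f"
  using Henstock_Kurzweil_Integration.integral_combine[OF assms(2,3)] assms
  by (metis continuous_on_subset integrable_continuous_interval subset_UNIV)

lemma int_nonneg:
  fixes f :: "real \<Rightarrow> real"
  assumes "continuous_on UNIV f" "\<forall>x. f x \<ge> 0"
  shows "integral {s..t} f \<ge> 0"
  using assms by (intro integral_nonneg) (auto intro: integrable_continuous_interval continuous_on_subset)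

lemma hc_meas_bound:
  assumes s0: "integral {s..t} D \<ge> 0" and [measurable]: "g \<in> borel_measurable borel" and gB: "\<forall>y. \<bar>g y\<bar> \<le> B"
  shows "(\<lambda>y. heat_conv D d t s g y) \<in> borel_measurable borel"
    and "\<forall>y. \<bar>heat_conv D d t s g y\<bar> \<le> exp (- integral {s..t} d) * B"
proof -
  let ?\<sigma> = "integral {s..t} D" and ?\<mu> = "integral {s..t} d"
  have B0: "0 \<le> B" using gB by (meson abs_ge_zero order_trans)
  show "(\<lambda>y. heat_conv D d t s g y) \<in> borel_measurable borel"
  proof (cases "?\<sigma> = 0")
    case True
    thus ?thesis by (simp add: hc_zero)
  next
    case False
    hence p: "?\<sigma> > 0" using s0 by simp
    have "(\<lambda>y. heat_conv D d t s g y) = (\<lambda>y. exp (-?\<mu>) * (\<integral>z. normal_density y (sqrt (2*?\<sigma>)) z * g z \<partial>lborel))"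
      using hc_pos[OF p _ gB] by simp
    thus ?thesis by simp
  qed
  show "\<forall>y. \<bar>heat_conv D d t s g y\<bar> \<le> exp (- ?\<mu>) * B"
  proof
    fix y
    show "\<bar>heat_conv D d t s g y\<bar> \<le> exp (- ?\<mu>) * B"
    proof (cases "?\<sigma> = 0")
      case True
      thus ?thesis using gB by (simp add: hc_zero abs_mult)
    next
      case False
      hence p: "?\<sigma> > 0" using s0 by simp
      have "\<bar>\<integral>z. normal_density y (sqrt (2*?\<sigma>)) z * g z \<partial>lborel\<bar> \<le> B"
        using p by (intro nd_int_bound[OF _ gB]) auto
      thus ?thesis using hc_pos[OF p _ gB] by (simp add: abs_mult)
    qed
  qed
qed

lemma hc_scale:
  "heat_conv D d t s (\<lambda>y. c * g y) x = c * heat_conv D d t s g x"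
  unfolding heat_conv_def Let_def
  by (simp add: mult.left_commute[of _ c] integral_mult_right)

lemma hc_const:
  assumes "integral {s..t} D \<ge> 0"
  shows "heat_conv D d t s (\<lambda>_. c) x = exp (- integral {s..t} d) * c"
proof (cases "integral {s..t} D = 0")
  case True thus ?thesis by (simp add: hc_zero)
next
  case False
  hence p: "integral {s..t} D > 0" using assms by simp
  show ?thesis using hc_pos[OF p, of "\<lambda>_. c" "\<bar>c\<bar>"] p by simp
qed

lemma hc_semigroup:
  assumes cD: "continuous_on UNIV D" and cd: "continuous_on UNIV d" and D0: "\<forall>x. D x \<ge> 0"
    and rs: "r \<le> s" and st: "s \<le> t"
    and [measurable]: "g \<in> borel_measurable borel" and gB: "\<forall>y. \<bar>g y\<bar> \<le> B"
  shows "heat_conv D d t s (\<lambda>y. heat_conv D d s r g y) x = heat_conv D d t r g x"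
proof -
  let ?\<sigma>1 = "integral {s..t} D" and ?\<sigma>2 = "integral {r..s} D" and ?\<sigma> = "integral {r..t} D"
  let ?\<mu>1 = "integral {s..t} d" and ?\<mu>2 = "integral {r..s} d" and ?\<mu> = "integral {r..t} d"
  have sD: "?\<sigma> = ?\<sigma>2 + ?\<sigma>1" using int_split[OF cD rs st] .
  have sd: "?\<mu> = ?\<mu>2 + ?\<mu>1" using int_split[OF cd rs st] .
  have e: "exp (-?\<mu>) = exp (-?\<mu>1) * exp (-?\<mu>2)" unfolding sd by (simp add: exp_add[symmetric])
  have n1: "?\<sigma>1 \<ge> 0" and n2: "?\<sigma>2 \<ge> 0" using int_nonneg[OF cD D0] by auto
  note hm = hc_meas_bound[OF n2 assms(6) gB, where d=d]
  show ?thesis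
  proof (cases "?\<sigma>1 = 0")
    case True
    note T1 = True
    show ?thesis
    proof (cases "?\<sigma>2 = 0")
      case True
      thus ?thesis unfolding hc_zero[OF T1] hc_zero[OF True] using sD T1 e hc_zero[of r t D] by simp
    next
      case False
      hence p2: "?\<sigma>2 > 0" using n2 by simp
      hence p: "?\<sigma> > 0" using sD T1 by simp
      show ?thesis unfolding hc_zero[OF T1] hc_pos[OF p2 assms(6) gB] hc_pos[OF p assms(6) gB] using sD T1 e by simp
    qed
  next
    case F1: False
    hence p1: "?\<sigma>1 > 0" using n1 by simp
    hence p: "?\<sigma> > 0" using sD n2 by simp
    have L: "heat_conv D d t s (\<lambda>y. heat_conv D d s r g y) x = exp (-?\<mu>1) *
       (\<integral>y. normal_density x (sqrt (2*?\<sigma>1)) y * heat_conv D d s r g y \<partial>lborel)"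
      by (rule hc_pos[OF p1 hm(1) hm(2)])
    show ?thesis
    proof (cases "?\<sigma>2 = 0")
      case True
      have "heat_conv D d t r g x = exp (-?\<mu>) *
         (\<integral>y. normal_density x (sqrt (2*?\<sigma>1)) y * g y \<partial>lborel)"
        using hc_pos[OF p _ gB] sD True by simp
      moreover have "heat_conv D d t s (\<lambda>y. heat_conv D d s r g y) x = exp (-?\<mu>2) * heat_conv D d t s g x"
        unfolding hc_zero[OF True] by (rule hc_scale)
      ultimately show ?thesis unfolding hc_pos[OF p1 assms(6) gB] e by (simp add: mult.left_commute mult.assoc)
    next
      case False
      hence p2: "?\<sigma>2 > 0" using n2 by simp
      have i: "heat_conv D d s r g y = exp (-?\<mu>2) * (\<integral>z. normal_density y (sqrt (2*?\<sigma>2)) z * g z \<partial>lborel)" for y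
        by (rule hc_pos[OF p2 _ gB]) simp
      have "(\<integral>y. normal_density x (sqrt (2*?\<sigma>1)) y * heat_conv D d s r g y \<partial>lborel)
          = exp (-?\<mu>2) * (\<integral>y. normal_density x (sqrt (2*?\<sigma>1)) y * (\<integral>z. normal_density y (sqrt (2*?\<sigma>2)) z * g z \<partial>lborel) \<partial>lborel)"
        unfolding i by (simp add: mult.left_commute)
      also have "\<dots> = exp (-?\<mu>2) * (\<integral>z. normal_density x (sqrt ((sqrt (2*?\<sigma>1))\<^sup>2 + (sqrt (2*?\<sigma>2))\<^sup>2)) z * g z \<partial>lborel)"
        using p1 p2 by (subst nd_semigroup[OF _ _ _ gB]) auto
      also have "(sqrt (2*?\<sigma>1))\<^sup>2 + (sqrt (2*?\<sigma>2))\<^sup>2 = 2 * ?\<sigma>"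
        using p1 p2 sD by simp
      finally show ?thesis unfolding L hc_pos[OF p assms(6) gB] e by (simp add: mult.left_commute mult.assoc)
    qed
  qed
qed

lemma borel_to_lebesgue_on:
  fixes f :: "real \<Rightarrow> real"
  assumes "f \<in> borel_measurable borel"
  shows "f \<in> borel_measurable (lebesgue_on S)"
  using assms by (metis measurable_lborel2 measurable_restrict_space1 measurable_completion)

lemma nd_affine:
  assumes c: "c > 0" and [measurable]: "g \<in> borel_measurable borel" and gB: "\<forall>y. \<bar>g y\<bar> \<le> B"
  shows "(\<integral>y. normal_density x c y * g y \<partial>lborel) = (\<integral>z. std_normal_density z * g (x + c * z) \<partial>lborel)"
proof -
  have "(\<integral>y. normal_density x c y * g y \<partial>lborel) = \<bar>c\<bar> *\<^sub>R (\<integral>z. normal_density x c (x + c * z) * g (x + c * z) \<partial>lborel)"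
    using c by (intro lborel_integral_real_affine) simp
  also have "\<dots> = (\<integral>z. c * normal_density x c (x + c * z) * g (x + c * z) \<partial>lborel)"
    using c by (simp add: mult.assoc)
  also have "\<dots> = (\<integral>z. std_normal_density z * g (x + c * z) \<partial>lborel)"
  proof (intro Bochner_Integration.integral_cong refl)
    fix z
    have "c * normal_density x c (x + c * z) = std_normal_density z"
      using c unfolding normal_density_def by (simp add: power_mult_distrib real_sqrt_mult field_simps)
    thus "c * normal_density x c (x + c * z) * g (x + c * z) = std_normal_density z * g (x + c * z)" by simp
  qed
  finally show ?thesis .
qed

lemma hc_unified:
  assumes s0: "integral {s..t} D \<ge> 0" and [measurable]: "g \<in> borel_measurable borel" and gB: "\<forall>y. \<bar>g y\<bar> \<le> B"
  shows "heat_conv D d t s g x = exp (- integral {s..t} d) *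
     (\<integral>z. std_normal_density z * g (x + sqrt (2 * integral {s..t} D) * z) \<partial>lborel)"
proof (cases "integral {s..t} D = 0")
  case True
  have "(\<integral>z. std_normal_density z * g x \<partial>lborel) = g x" by simp
  thus ?thesis using True by (simp add: hc_zero)
next
  case False
  hence p: "integral {s..t} D > 0" using s0 by simp
  show ?thesis unfolding hc_pos[OF p assms(2) gB]
    using p by (subst nd_affine[OF _ assms(2) gB]) auto
qed

lemma meas_param:
  fixes k :: "real \<Rightarrow> real \<Rightarrow> real"
  assumes "continuous_on UNIV (\<lambda>(r,z). k r z)"
  shows "(\<lambda>r. \<integral>z. std_normal_density z * k r z \<partial>lborel) \<in> borel_measurable borel"
proof -
  have "(\<lambda>(r,z). k r z) \<in> borel_measurable borel"
    by (rule borel_measurable_continuous_onI[OF assms])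
  hence [measurable]: "(\<lambda>(r,z). k r z) \<in> borel_measurable (borel \<Otimes>\<^sub>M lborel)"
  proof -
    have "sets (borel \<Otimes>\<^sub>M lborel) = sets (borel \<Otimes>\<^sub>M (borel::real measure))"
      by (rule sets_pair_measure_cong) auto
    also have "\<dots> = sets (borel :: (real \<times> real) measure)" by (subst borel_prod) (rule refl)
    finally show "(\<lambda>(r,z). k r z) \<in> borel_measurable borel \<Longrightarrow> (\<lambda>(r,z). k r z) \<in> borel_measurable (borel \<Otimes>\<^sub>M lborel)"
      using measurable_cong_sets by blast
  qed
  show ?thesis by measurable
qed

lemma hc_0: "heat_conv D d t s (\<lambda>_. 0) x = 0"
  unfolding heat_conv_def Let_def by simp

lemma integral_restrict_zero:
  fixes f g :: "real \<Rightarrow> real"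
  assumes "(f has_integral I) {a..b}" "{a..b} \<subseteq> {c..d}"
    and "\<And>x. x \<in> {c..d} \<Longrightarrow> x \<notin> {a..b} \<Longrightarrow> g x = 0"
    and "\<And>x. x \<in> {a..b} \<Longrightarrow> g x = f x"
  shows "integral {c..d} g = I"
proof -
  define f' where "f' x = (if x \<in> {a..b} then f x else 0)" for x
  have "(f' has_integral I) {a..b}"
    using assms(1) by (rule has_integral_eq[rotated]) (simp add: f'_def)
  hence "(f' has_integral I) {c..d}"
    by (rule has_integral_on_superset[OF _ _ assms(2)]) (auto simp: f'_def)
  hence "(g has_integral I) {c..d}"
    by (rule has_integral_eq[rotated]) (auto simp: f'_def assms(3,4))
  thus ?thesis by (rule integral_unique)
qed



theorem lemma5p2:
  fixes T \<alpha> \<beta> t\<alpha> t\<beta> :: real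
    and DM DI dM dI \<tau> p h w :: "real \<Rightarrow> real"
    and u :: "real \<Rightarrow> real \<Rightarrow> real"
  assumes "T > 0"
    and "C1_periodic T DM" and "C1_periodic T DI" and "C1_periodic T dM" and "C1_periodic T dI"
    and "C1_periodic T \<tau>" and "C1_periodic T p"
    and "\<forall>t. DM t \<ge> 0" and "\<forall>t. DI t \<ge> 0" and "\<forall>t. dM t > 0" and "\<forall>t. dI t > 0"
    and "\<forall>t. \<tau> t > 0" and "\<forall>t. deriv \<tau> t < 1" and "\<forall>t. p t \<ge> 0"
    and "h C1_differentiable_on UNIV" and "\<forall>v. h v \<ge> 0"
    and "0 < \<alpha>" and "\<alpha> \<le> \<beta>" and "\<beta> < t\<alpha>" and "t\<alpha> \<le> t\<beta>" and "t\<beta> < T"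
    and "t\<alpha> - \<tau> t\<alpha> = \<alpha>" and "t\<beta> - \<tau> t\<beta> = \<beta>"
    and "\<forall>t \<in> {0..\<alpha>} \<union> {\<beta>..T}. p t = 0"
    and "pde_solution DM dM \<tau> (Rop DI dI \<tau> p h) u"
  shows "(\<forall>t>T. \<forall>x.
            integral {0..T} (\<lambda>s. heat_conv DI dI t s (\<lambda>y. bfun p h s (u s y)) x)
          = integral {0..T} (\<lambda>s. heat_conv DI dI t s (Rop DI dI \<tau> p h s (u (s - \<tau> s))) x))
       \<and> ((\<forall>s x. u s x = w s) \<longrightarrow>
          (\<forall>t>T. \<forall>x.
            integral {0..T} (\<lambda>s. exp (- integral {s..t} dI) * bfun p h s (w s))
          = integral {0..T} (\<lambda>s. exp (- integral {s..t} dI)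
                                   * Rop DI dI \<tau> p h s (\<lambda>_. w (s - \<tau> s)) x)))"
proof -
  note A = assms
  have cDI: "continuous_on UNIV DI" using A(3) unfolding C1_periodic_def by (blast intro: C1_differentiable_imp_continuous_on)
  have cdI: "continuous_on UNIV dI" using A(5) unfolding C1_periodic_def by (blast intro: C1_differentiable_imp_continuous_on)
  have ctau: "continuous_on UNIV \<tau>" using A(6) unfolding C1_periodic_def by (blast intro: C1_differentiable_imp_continuous_on)
  have cp: "continuous_on UNIV p" using A(7) unfolding C1_periodic_def by (blast intro: C1_differentiable_imp_continuous_on)
  have ch: "continuous_on UNIV h" using A(15) by (blast intro: C1_differentiable_imp_continuous_on)
  have pper: "\<And>r. p (r + T) = p r" using A(7) unfolding C1_periodic_def by blast
  have tper: "\<And>r. \<tau> (r + T) = \<tau> r" using A(6) unfolding C1_periodic_def by blast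
  have DI0: "\<forall>x. DI x \<ge> 0" using A(9) by blast
  have dI0: "\<forall>x. dI x \<ge> 0" using A(11) less_imp_le by blast
  have dtau: "\<And>s. (\<tau> has_real_derivative deriv \<tau> s) (at s)"
    using A(6) unfolding C1_periodic_def C1_differentiable_on_eq
    by (simp add: DERIV_deriv_iff_real_differentiable)
  have cdtau: "continuous_on UNIV (deriv \<tau>)"
  proof -
    have "continuous_on UNIV (\<lambda>x. vector_derivative \<tau> (at x))"
      using A(6) unfolding C1_periodic_def C1_differentiable_on_eq by blast
    moreover have "vector_derivative \<tau> (at x) = deriv \<tau> x" for x
      using dtau[of x] by (intro vector_derivative_at) (simp add: has_real_derivative_iff_has_vector_derivative)
    ultimately show ?thesis by simp
  qed
  define \<theta> where "\<theta> s = s - \<tau> s" for s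
  define \<theta>' where "\<theta>' s = 1 - deriv \<tau> s" for s
  have d\<theta>: "(\<theta> has_real_derivative \<theta>' s) (at s)" for s
    unfolding \<theta>_def \<theta>'_def by (auto intro!: derivative_eq_intros dtau)
  have \<theta>'pos: "\<theta>' s > 0" for s using A(13) unfolding \<theta>'_def by auto
  have \<theta>mono: "\<theta> a < \<theta> b" if "a < b" for a b
    using DERIV_pos_imp_increasing[OF that] d\<theta> \<theta>'pos by blast
  have \<theta>le: "\<theta> s < s" for s using A(12) unfolding \<theta>_def by auto
  have \<theta>0: "\<theta> 0 > \<beta> - T"
  proof -
    have "\<theta> T > \<beta>" using \<theta>mono[of t\<beta> T] A(21,23) unfolding \<theta>_def by simp
    moreover have "\<theta> T = \<theta> 0 + T" unfolding \<theta>_def using tper[of 0] by simp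
    ultimately show ?thesis by simp
  qed
  have pzero: "p r = 0" if "r \<in> {\<beta> - T<..<\<alpha>} \<union> {\<beta>..T}" for r
  proof (cases "r \<ge> 0")
    case True thus ?thesis using that A(24) by auto
  next
    case False
    hence "r + T \<in> {\<beta>..T}" using that A(17,18) by auto
    thus ?thesis using A(24) pper[of r] by auto
  qed
  obtain B where uB: "\<forall>r\<in>{0..T}. \<forall>y. \<bar>u r y\<bar> \<le> B"
    using A(25) unfolding pde_solution_def by blast
  have ucont: "continuous_on ({0..} \<times> UNIV) (\<lambda>(t, x). u t x)"
    using A(25) unfolding pde_solution_def by blast
  obtain Hb where Hb: "\<And>v. v \<in> {-B..B} \<Longrightarrow> \<bar>h v\<bar> \<le> Hb"
  proof -
    have "bounded (h ` {-B..B})"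
      by (intro compact_imp_bounded compact_continuous_image continuous_on_subset[OF ch]) auto
    then obtain K where "\<forall>v\<in>{-B..B}. norm (h v) \<le> K" unfolding bounded_iff by blast
    thus ?thesis by (intro that[of K]) auto
  qed
  obtain Pb where Pb: "\<And>r. r \<in> {0..T} \<Longrightarrow> \<bar>p r\<bar> \<le> Pb"
  proof -
    have "bounded (p ` {0..T})"
      by (intro compact_imp_bounded compact_continuous_image continuous_on_subset[OF cp]) auto
    then obtain K where "\<forall>v\<in>{0..T}. norm (p v) \<le> K" unfolding bounded_iff by blast
    thus ?thesis by (intro that[of K]) auto
  qed
  define M where "M = Pb * Hb"
  define f where "f r y = bfun p h r (u r y)" for r y
  have fB: "\<forall>y. \<bar>f r y\<bar> \<le> M" if "r \<in> {0..T}" for r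
  proof
    fix y
    have "\<bar>u r y\<bar> \<le> B" using uB that by blast
    hence "\<bar>h (u r y)\<bar> \<le> Hb" using Hb[of "u r y"] by (simp add: abs_le_iff)
    moreover have "\<bar>p r\<bar> \<le> Pb" using Pb that by blast
    ultimately show "\<bar>f r y\<bar> \<le> M" unfolding f_def bfun_def M_def abs_mult
      by (intro mult_mono) auto
  qed
  have M0: "M \<ge> 0" using fB[of 0] A(1) by (meson abs_ge_zero atLeastAtMost_iff order_trans less_imp_le order_refl)
  have fm: "(\<lambda>y. f r y) \<in> borel_measurable borel" if "r \<in> {0..T}" for r
  proof -
    have "continuous_on UNIV (\<lambda>y. u r y)"
    proof -
      have "continuous_on UNIV (Pair r)" by (intro continuous_intros)
      moreover have "range (Pair r) \<subseteq> {0..} \<times> UNIV" using that by auto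
      ultimately show ?thesis using continuous_on_compose2[OF ucont, of UNIV "\<lambda>y. (r, y)"] by simp
    qed
    hence "continuous_on UNIV (\<lambda>y. f r y)" unfolding f_def bfun_def
      by (auto intro!: continuous_intros continuous_on_compose2[OF ch])
    thus ?thesis by (rule borel_measurable_continuous_onI)
  qed
  have fzero: "(\<lambda>y. f r y) = (\<lambda>_. 0)" if "p r = 0" for r
    using that unfolding f_def bfun_def by simp
  have part1: "integral {0..T} (\<lambda>s. heat_conv DI dI t s (\<lambda>y. bfun p h s (u s y)) x)
          = integral {0..T} (\<lambda>s. heat_conv DI dI t s (Rop DI dI \<tau> p h s (u (s - \<tau> s))) x)"
    if tT: "t > T" for t x
  proof -
    define F where "F r = heat_conv DI dI t r (\<lambda>y. f r y) x" for r
    define cl where "cl r = max \<alpha> (min \<beta> r)" for r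
    define F' where "F' r = exp (- integral {cl r..t} dI) *
       (\<integral>z. std_normal_density z * (p (cl r) * h (u (cl r) (x + sqrt (2 * integral {cl r..t} DI) * z))) \<partial>lborel)" for r
    have clin: "cl r \<in> {\<alpha>..\<beta>}" for r unfolding cl_def using A(18) by auto
    have ccl: "continuous_on UNIV cl" unfolding cl_def by (intro continuous_intros)
    have cint: "continuous_on UNIV (\<lambda>r. integral {cl r..t} g)" if "continuous_on UNIV g" for g :: "real \<Rightarrow> real"
    proof -
      have "continuous_on {\<alpha>..t} (\<lambda>r. integral {r..t} g)"
        by (intro indefinite_integral_continuous_1' integrable_continuous_interval continuous_on_subset[OF that]) auto
      moreover have "cl ` UNIV \<subseteq> {\<alpha>..t}" using clin A(19,20,21) tT by fastforce
      ultimately show ?thesis using continuous_on_compose2[OF _ ccl] by blast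
    qed
    have F'm: "F' \<in> borel_measurable borel"
    proof -
      have "continuous_on UNIV (\<lambda>q. u (cl (fst q)) (x + sqrt (2 * integral {cl (fst q)..t} DI) * snd q))"
      proof -
        have "continuous_on UNIV (\<lambda>q::real\<times>real. (cl (fst q), x + sqrt (2 * integral {cl (fst q)..t} DI) * snd q))"
          by (intro continuous_intros continuous_on_compose2[OF ccl] continuous_on_compose2[OF cint[OF cDI]]) auto
        moreover have "range (\<lambda>q::real\<times>real. (cl (fst q), x + sqrt (2 * integral {cl (fst q)..t} DI) * snd q)) \<subseteq> {0..} \<times> UNIV"
        proof -
          have "cl r \<ge> 0" for r using clin[of r] A(17) by auto
          thus ?thesis by auto
        qed
        ultimately show ?thesis using continuous_on_compose2[OF ucont] by fastforce
      qed
      hence "continuous_on UNIV (\<lambda>q. p (cl (fst q)) * h (u (cl (fst q)) (x + sqrt (2 * integral {cl (fst q)..t} DI) * snd q)))"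
        by (intro continuous_intros continuous_on_compose2[OF cp] continuous_on_compose2[OF ccl] continuous_on_compose2[OF ch]) auto
      hence "continuous_on UNIV (\<lambda>(r,z). p (cl r) * h (u (cl r) (x + sqrt (2 * integral {cl r..t} DI) * z)))"
        by (simp add: case_prod_beta')
      from meas_param[OF this] have "(\<lambda>r. \<integral>z. std_normal_density z * (p (cl r) * h (u (cl r) (x + sqrt (2 * integral {cl r..t} DI) * z))) \<partial>lborel) \<in> borel_measurable borel" .
      moreover have "(\<lambda>r. exp (- integral {cl r..t} dI)) \<in> borel_measurable borel"
        by (intro borel_measurable_continuous_onI continuous_intros cint[OF cdI])
      ultimately show ?thesis unfolding F'_def[abs_def] by measurable
    qed
    have FF': "F r = F' r" if "r \<in> {\<alpha>..\<beta>}" for r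
    proof -
      have r: "r \<in> {0..T}" "cl r = r" using that A(17,19,20,21) unfolding cl_def by auto
      show ?thesis unfolding F_def F'_def r(2)
        by (subst hc_unified[OF int_nonneg[OF cDI DI0] fm[OF r(1)] fB[OF r(1)]]) (simp add: f_def bfun_def)
    qed
    have Fbound: "\<bar>F r\<bar> \<le> M" if "r \<in> {0..T}" for r
    proof -
      have "\<bar>F r\<bar> \<le> exp (- integral {r..t} dI) * M"
        unfolding F_def using hc_meas_bound(2)[OF int_nonneg[OF cDI DI0] fm[OF that] fB[OF that]] by blast
      also have "\<dots> \<le> 1 * M" using int_nonneg[OF cdI dI0, of r t] M0 by (intro mult_right_mono) auto
      finally show ?thesis by simp
    qed
    have Fabs: "F absolutely_integrable_on {\<alpha>..\<beta>}"
    proof (rule measurable_bounded_by_integrable_imp_absolutely_integrable[where g="\<lambda>_. M"])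
      show "F \<in> borel_measurable (lebesgue_on {\<alpha>..\<beta>})"
        using borel_to_lebesgue_on[OF F'm] measurable_lebesgue_cong[of "{\<alpha>..\<beta>}" F F'] FF' by blast
      show "{\<alpha>..\<beta>} \<in> sets lebesgue" by simp
      show "(\<lambda>_. M) integrable_on {\<alpha>..\<beta>}" by (intro integrable_continuous_interval continuous_on_const)
      show "\<And>r. r \<in> {\<alpha>..\<beta>} \<Longrightarrow> norm (F r) \<le> M" using Fbound A(17,19,20,21) by auto
    qed
    have img: "\<theta> ` {t\<alpha>..t\<beta>} = {\<alpha>..\<beta>}"
    proof
      show "\<theta> ` {t\<alpha>..t\<beta>} \<subseteq> {\<alpha>..\<beta>}"
      proof clarify
        fix s assume s: "s \<in> {t\<alpha>..t\<beta>}"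
        have "\<theta> t\<alpha> \<le> \<theta> s" "\<theta> s \<le> \<theta> t\<beta>" using s \<theta>mono[of t\<alpha> s] \<theta>mono[of s t\<beta>]
          by (cases "s = t\<alpha>"; cases "s = t\<beta>"; auto)+
        thus "\<theta> s \<in> {\<alpha>..\<beta>}" using A(22,23) unfolding \<theta>_def by auto
      qed
      show "{\<alpha>..\<beta>} \<subseteq> \<theta> ` {t\<alpha>..t\<beta>}"
      proof
        fix y assume y: "y \<in> {\<alpha>..\<beta>}"
        have c: "continuous_on {t\<alpha>..t\<beta>} \<theta>" unfolding \<theta>_def
          by (intro continuous_intros continuous_on_subset[OF ctau]) auto
        have "\<theta> t\<alpha> \<le> y" "y \<le> \<theta> t\<beta>" using y A(22,23) unfolding \<theta>_def by auto
        from IVT'[OF this A(20) c] show "y \<in> \<theta> ` {t\<alpha>..t\<beta>}" by auto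
      qed
    qed
    have inj: "inj_on \<theta> {t\<alpha>..t\<beta>}"
      by (rule strict_mono_on_imp_inj_on) (auto simp: strict_mono_on_def \<theta>mono)
    have cov: "(\<lambda>s. \<bar>\<theta>' s\<bar> * F (\<theta> s)) absolutely_integrable_on {t\<alpha>..t\<beta>} \<and>
           integral {t\<alpha>..t\<beta>} (\<lambda>s. \<bar>\<theta>' s\<bar> * F (\<theta> s)) = integral {\<alpha>..\<beta>} F"
      using has_absolute_integral_change_of_variables_1'[of "{t\<alpha>..t\<beta>}" \<theta> \<theta>' F "integral {\<alpha>..\<beta>} F"]
        img inj Fabs d\<theta> by (auto intro: has_field_derivative_at_within)
    have I1: "(F has_integral integral {\<alpha>..\<beta>} F) {\<alpha>..\<beta>}"
      using Fabs by (simp add: absolutely_integrable_on_def has_integral_integral)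
    have I2: "((\<lambda>s. \<bar>\<theta>' s\<bar> * F (\<theta> s)) has_integral integral {\<alpha>..\<beta>} F) {t\<alpha>..t\<beta>}"
      using cov by (metis absolutely_integrable_on_def has_integral_integral)
    have LHS: "integral {0..T} (\<lambda>s. heat_conv DI dI t s (\<lambda>y. bfun p h s (u s y)) x) = integral {\<alpha>..\<beta>} F"
    proof (rule integral_restrict_zero[OF I1])
      show "{\<alpha>..\<beta>} \<subseteq> {0..T}" using A(17,18,19,20,21) by auto
      show "heat_conv DI dI t s (\<lambda>y. bfun p h s (u s y)) x = 0" if "s \<in> {0..T}" "s \<notin> {\<alpha>..\<beta>}" for s
      proof -
        have "p s = 0" using A(24) that by auto
        thus ?thesis using fzero[of s] hc_0 unfolding f_def by simp
      qed
      show "heat_conv DI dI t s (\<lambda>y. bfun p h s (u s y)) x = F s" for s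
        unfolding F_def f_def ..
    qed
    have RHS: "integral {0..T} (\<lambda>s. heat_conv DI dI t s (Rop DI dI \<tau> p h s (u (s - \<tau> s))) x) = integral {\<alpha>..\<beta>} F"
    proof (rule integral_restrict_zero[OF I2])
      show "{t\<alpha>..t\<beta>} \<subseteq> {0..T}" using A(17,18,19,20,21) by auto
      have Rop_eq: "Rop DI dI \<tau> p h s (u (s - \<tau> s)) = (\<lambda>y. (1 - deriv \<tau> s) * heat_conv DI dI s (\<theta> s) (\<lambda>y. f (\<theta> s) y) y)" for s
        unfolding Rop_def f_def \<theta>_def by simp
      show "heat_conv DI dI t s (Rop DI dI \<tau> p h s (u (s - \<tau> s))) x = 0" if "s \<in> {0..T}" "s \<notin> {t\<alpha>..t\<beta>}" for s
      proof -
        have "\<theta> s \<in> {\<beta> - T<..<\<alpha>} \<union> {\<beta>..T}"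
        proof (cases "s < t\<alpha>")
          case True
          have "\<theta> s < \<alpha>" using \<theta>mono[OF True] A(22) unfolding \<theta>_def by simp
          moreover have "\<theta> 0 \<le> \<theta> s" using that \<theta>mono[of 0 s] by (cases "s = 0") auto
          ultimately show ?thesis using \<theta>0 by auto
        next
          case False
          hence "t\<beta> < s" using that by auto
          hence "\<theta> s > \<beta>" using \<theta>mono A(23) unfolding \<theta>_def by fastforce
          moreover have "\<theta> s < T" using \<theta>le[of s] that by auto
          ultimately show ?thesis by auto
        qed
        hence "p (\<theta> s) = 0" by (rule pzero)
        thus ?thesis unfolding Rop_eq fzero[OF \<open>p (\<theta> s) = 0\<close>] hc_0 by (simp add: hc_0)
      qed
      show "heat_conv DI dI t s (Rop DI dI \<tau> p h s (u (s - \<tau> s))) x = \<bar>\<theta>' s\<bar> * F (\<theta> s)"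
        if s: "s \<in> {t\<alpha>..t\<beta>}" for s
      proof -
        have ts: "\<theta> s \<in> {\<alpha>..\<beta>}" using img s by blast
        hence ts0: "\<theta> s \<in> {0..T}" using A(17,18,19,20,21) by auto
        have st: "s \<le> t" using s A(21) tT by auto
        have "heat_conv DI dI t s (Rop DI dI \<tau> p h s (u (s - \<tau> s))) x
            = (1 - deriv \<tau> s) * heat_conv DI dI t s (\<lambda>y. heat_conv DI dI s (\<theta> s) (\<lambda>y. f (\<theta> s) y) y) x"
          unfolding Rop_eq by (rule hc_scale)
        also have "\<dots> = (1 - deriv \<tau> s) * F (\<theta> s)"
          unfolding F_def using hc_semigroup[OF cDI cdI DI0 less_imp_le[OF \<theta>le] st fm[OF ts0] fB[OF ts0]] by simp
        finally show ?thesis using \<theta>'pos[of s] unfolding \<theta>'_def by simp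
      qed
    qed
    show ?thesis using LHS RHS by simp
  qed
  have part2: "integral {0..T} (\<lambda>s. exp (- integral {s..t} dI) * bfun p h s (w s))
          = integral {0..T} (\<lambda>s. exp (- integral {s..t} dI) * Rop DI dI \<tau> p h s (\<lambda>_. w (s - \<tau> s)) x)"
    if tT: "t > T" and uw: "\<forall>s x. u s x = w s" for t x
  proof -
    have e1: "heat_conv DI dI t s (\<lambda>y. bfun p h s (u s y)) x = exp (- integral {s..t} dI) * bfun p h s (w s)" for s
      using uw hc_const[OF int_nonneg[OF cDI DI0]] by simp
    have Rc: "Rop DI dI \<tau> p h s (\<lambda>_. c) = (\<lambda>_. Rop DI dI \<tau> p h s (\<lambda>_. c) x)" for s c
      unfolding Rop_def[abs_def] using hc_const[OF int_nonneg[OF cDI DI0]] by simp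
    have e2: "heat_conv DI dI t s (Rop DI dI \<tau> p h s (u (s - \<tau> s))) x
        = exp (- integral {s..t} dI) * Rop DI dI \<tau> p h s (\<lambda>_. w (s - \<tau> s)) x" for s
    proof -
      have "u (s - \<tau> s) = (\<lambda>_. w (s - \<tau> s))" using uw by auto
      moreover have "heat_conv DI dI t s (Rop DI dI \<tau> p h s (\<lambda>_. w (s - \<tau> s))) x
          = heat_conv DI dI t s (\<lambda>_. Rop DI dI \<tau> p h s (\<lambda>_. w (s - \<tau> s)) x) x"
        by (rule arg_cong[where f="\<lambda>\<phi>. heat_conv DI dI t s \<phi> x", OF Rc])
      ultimately show ?thesis by (simp add: hc_const[OF int_nonneg[OF cDI DI0]])
    qed
    show ?thesis using part1[OF tT, of x] unfolding e1 e2 .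
  qed
  show ?thesis using part1 part2 by blast
qed

end
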